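(* Consider a Kepler billiard in the plane: a particle moves under a Kepler(-Coulomb) potential centered at $F$ and is elastically reflected at a wall $\mathbf{K}$ which is either an ellipse or a branch of a hyperbola with foci $F$ and $F'$. Choose coordinates with $F'=(0,0)$ and $F=(-2c_{\mathbf{K}},0)$, and let $a_{\mathbf{K}}$ be the semi-major axis of $\mathbf{K}$. Fix a non-zero energy, so that the Keplerian arcs are arcs of conics with focus $F$ and common semi-major axis $a$, and let $F_1,F_2,\dots$ be the second foci of the successive Keplerian arcs along a billiard trajectory; these lie on a circle centered at $F'$ of radius $R$. Then there are real numbers $x_0=x_0(a,R)$ and $r_0=r_0(a,R)$, depending only on $\mathbf{K}$ and given by quadratic functions of $a$ and $R$, such that every line $\ell(F_iF_{i+1})$ through consecutive second foci is tangent to the circle with center $(x_0,0)$ and radius $|r_0|$ (the foci-caustic circle).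
   Context: Elastic reflection means the velocity is reflected with respect to the tangent line to $\mathbf{K}$ at the impact point, preserving energy; the semi-major axis $a$ of the Keplerian orbit is preserved under reflections. The second focus of an elliptic Keplerian orbit $\{P:|PF|+|PF_i|=2a\}$ is $F_i$; for hyperbolic orbits it is the other focus of the hyperbola containing the arc. It is a known fact that the second foci along a trajectory all lie on a circle centered at $F'$; its radius $R$ is a conserved quantity. *)

theory Defs
  imports "HOL-Analysis.Analysis"
begin

text \<open>Reflection of a vector v with respect to the line orthogonal to n (n a normal vector of
  that line); for n a normal of the wall at the impact point this is elastic reflection of the
  velocity with respect to the tangent line of the wall.\<close>
definition reflect_normal :: "real^2 \<Rightarrow> real^2 \<Rightarrow> real^2" where
  "reflect_normal n v = v - (2 * (v \<bullet> n) / (n \<bullet> n)) *\<^sub>R n"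

text \<open>The wall K with foci F and F' = 0 and (signed) parameter aK:
  s = 1: the ellipse |PF| + |PF'| = 2 aK;
  s = -1: the hyperbola branch |PF| - |PF'| = 2 aK (aK of either sign selects the branch).\<close>
definition wall :: "real^2 \<Rightarrow> real \<Rightarrow> real \<Rightarrow> (real^2) set" where
  "wall F s aK = {P. dist P F + s * dist P 0 = 2 * aK}"

text \<open>Normal vector of the wall at P (gradient of the defining function).\<close>
definition wall_normal :: "real^2 \<Rightarrow> real \<Rightarrow> real^2 \<Rightarrow> real^2" where
  "wall_normal F s P = sgn (P - F) + s *\<^sub>R sgn P"

text \<open>Keplerian orbit with focus F (the Kepler centre), second focus F1 and signed semi-major
  axis a (a > 0: elliptic orbit |QF| + |QF1| = 2a; a < 0: hyperbolic orbit, the branch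
  |QF1| - |QF| = 2|a| around the attracting centre F).\<close>
definition kepler_orbit :: "real^2 \<Rightarrow> real^2 \<Rightarrow> real \<Rightarrow> (real^2) set" where
  "kepler_orbit F F1 a = {Q. dist Q F + sgn a * dist Q F1 = 2 * a}"

definition kepler_normal :: "real^2 \<Rightarrow> real^2 \<Rightarrow> real \<Rightarrow> real^2 \<Rightarrow> real^2" where
  "kepler_normal F F1 a Q = sgn (Q - F) + sgn a *\<^sub>R sgn (Q - F1)"

text \<open>F1 is the second focus of the (non-degenerate) Keplerian orbit with focus F and
  semi-major axis a which passes through P with velocity v (v tangent to the orbit at P).\<close>
definition is_second_focus :: "real^2 \<Rightarrow> real \<Rightarrow> real^2 \<Rightarrow> real^2 \<Rightarrow> real^2 \<Rightarrow> bool" where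
  "is_second_focus F a P v F1 \<longleftrightarrow>
     P \<in> kepler_orbit F F1 a \<and> P \<noteq> F \<and> P \<noteq> F1 \<and>
     kepler_normal F F1 a P \<noteq> 0 \<and> v \<noteq> 0 \<and> v \<bullet> kepler_normal F F1 a P = 0"

text \<open>A Kepler billiard trajectory in the wall (F, s, aK) at energy level a:
  P i is the i-th impact point, v i the velocity just before the i-th impact, Fs i the second
  focus of the i-th Keplerian arc (the arc arriving at P i); the reflected arc leaving P i
  has second focus Fs (Suc i).\<close>
definition billiard_traj ::
  "real^2 \<Rightarrow> real \<Rightarrow> real \<Rightarrow> real \<Rightarrow> (nat \<Rightarrow> real^2) \<Rightarrow> (nat \<Rightarrow> real^2) \<Rightarrow> (nat \<Rightarrow> real^2) \<Rightarrow> bool"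
  where
  "billiard_traj F s aK a P v Fs \<longleftrightarrow>
     (\<forall>i. P i \<in> wall F s aK \<and>
          is_second_focus F a (P i) (v i) (Fs i) \<and>
          is_second_focus F a (P i) (reflect_normal (wall_normal F s (P i)) (v i)) (Fs (Suc i)))"

definition quad2 :: "real \<times> real \<times> real \<times> real \<times> real \<times> real \<Rightarrow> real \<Rightarrow> real \<Rightarrow> real" where
  "quad2 k a R = (case k of (k1, k2, k3, k4, k5, k6) \<Rightarrow>
      k1 * a\<^sup>2 + k2 * a * R + k3 * R\<^sup>2 + k4 * a + k5 * R + k6)"

end

theory Submission
  imports Defs
begin

lemma inner2: "(x::real^2) \<bullet> y = x$1*y$1 + x$2*y$2"
  by (simp add: inner_vec_def sum_2)

lemma hyper_infdist:
  fixes X P :: "real^2"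
  assumes "P \<noteq> 0"
  shows "infdist X {x. x \<bullet> P = k} = \<bar>X \<bullet> P - k\<bar> / norm P"
proof -
  have np: "norm P > 0" using assms by simp
  define Y where "Y = X - ((X \<bullet> P - k) / (P \<bullet> P)) *\<^sub>R P"
  have pp: "P \<bullet> P = (norm P)^2" by (simp add: power2_norm_eq_inner)
  have Yin: "Y \<bullet> P = k" using np pp unfolding Y_def by (simp add: inner_diff_left)
  have dY: "dist X Y = \<bar>X \<bullet> P - k\<bar> / norm P"
    using np unfolding Y_def dist_norm pp by (simp add: power2_eq_square)
  have ne: "{x. x \<bullet> P = k} \<noteq> {}" using Yin by blast
  have lo: "\<bar>X \<bullet> P - k\<bar> / norm P \<le> dist X y" if "y \<bullet> P = k" for y
  proof -
    have "\<bar>X \<bullet> P - k\<bar> = \<bar>(X - y) \<bullet> P\<bar>" using that by (simp add: inner_diff_left)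
    also have "\<dots> \<le> norm (X - y) * norm P" by (rule Cauchy_Schwarz_ineq2)
    finally show ?thesis using np by (simp add: dist_norm divide_le_eq)
  qed
  have "infdist X {x. x \<bullet> P = k} \<le> dist X Y" by (rule infdist_le) (simp add: Yin)
  moreover have "infdist X {x. x \<bullet> P = k} \<ge> \<bar>X \<bullet> P - k\<bar> / norm P"
    unfolding infdist_notempty[OF ne] by (rule cINF_greatest) (use ne lo in auto)
  ultimately show ?thesis using dY by linarith
qed

lemma line_eq:
  fixes A B P :: "real^2"
  assumes "A \<noteq> B" "A \<bullet> P = k" "B \<bullet> P = k" "P \<noteq> 0"
  shows "affine hull {A, B} = {x. x \<bullet> P = k}"
proof
  show "affine hull {A, B} \<subseteq> {x. x \<bullet> P = k}"
    using assms by (auto simp: affine_hull_2 inner_add_left algebra_simps)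
       (metis distrib_right mult_1)
next
  show "{x. x \<bullet> P = k} \<subseteq> affine hull {A, B}"
  proof
    fix x assume "x \<in> {x. x \<bullet> P = k}"
    then have xk: "x \<bullet> P = k" by simp
    define w where "w = B - A"
    define z where "z = x - A"
    have w0: "w \<bullet> P = 0" using assms unfolding w_def by (simp add: inner_diff_left)
    have z0: "z \<bullet> P = 0" using assms xk unfolding z_def by (simp add: inner_diff_left)
    have wn: "w \<noteq> 0" using assms unfolding w_def by simp
    have ww: "w \<bullet> w > 0" using wn by simp
    have P0: "P$1 \<noteq> 0 \<or> P$2 \<noteq> 0" using assms(4) by (metis exhaust_2 vec_eq_iff zero_index)
    have cross: "z$1 * w$2 = z$2 * w$1"
      using w0 z0 P0 unfolding inner2
      by (smt (verit) mult.commute mult.left_commute mult_cancel_left mult_minus_left)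
    define t where "t = (z \<bullet> w) / (w \<bullet> w)"
    have "z = t *\<^sub>R w"
    proof -
      have "(w \<bullet> w) *\<^sub>R z = (z \<bullet> w) *\<^sub>R w"
        unfolding vec_eq_iff inner2 forall_2 using cross
        by (simp add: algebra_simps power2_eq_square)
      then have "inverse (w \<bullet> w) *\<^sub>R ((w \<bullet> w) *\<^sub>R z) = inverse (w \<bullet> w) *\<^sub>R ((z \<bullet> w) *\<^sub>R w)"
        by simp
      then show ?thesis unfolding t_def using ww by (simp add: divide_inverse mult.commute)
    qed
    then have "x = (1 - t) *\<^sub>R A + t *\<^sub>R B" unfolding z_def w_def
      by (simp add: algebra_simps)
    then show "x \<in> affine hull {A, B}" unfolding affine_hull_2 by force
  qed
qed

lemma alg:
  fixes c aK s a R p1 p2 r d rho k :: real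
  assumes c: "c > 0" and D: "aK^2 - c^2 \<noteq> 0" and s2: "s^2 = 1"
    and hr: "r^2 = p1^2 + p2^2" and hd: "d^2 = (p1 + 2*c)^2 + p2^2"
    and hd2: "d = 2*aK - s*r" and hrho: "rho^2 = (2*a - d)^2"
    and hk: "2*k = r^2 + R^2 - rho^2"
  shows "(c*(R^2 - 4*(a-aK)^2)/(2*(aK^2-c^2))) * p1 - k
         = - s * r * (aK*(R^2 - 4*(a-aK)^2)/(2*(aK^2-c^2)) - 2*(a-aK))"
proof -
  have "4*c*p1 = d^2 - r^2 - 4*c^2" using hr hd by (simp add: power2_eq_square algebra_simps)
  also have "... = 4*aK^2 - 4* s*aK*r - 4*c^2"
  proof -
    have "d^2 = 4*aK^2 - 4* s*aK*r + s^2*r^2" unfolding hd2 by (simp add: power2_eq_square algebra_simps)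
    then show ?thesis using s2 by simp
  qed
  finally have p1: "p1 = (aK^2 - c^2 - s*aK*r)/c" using c by (simp add: field_simps)
  have k: "k = (R^2 - 4*(a-aK)^2)/2 - 2* s*(a-aK)*r"
  proof -
    have "rho^2 = 4*(a-aK)^2 + 4* s*(a-aK)*r + s^2*r^2" unfolding hrho hd2 by (simp add: power2_eq_square algebra_simps)
    then have "rho^2 = 4*(a-aK)^2 + 4* s*(a-aK)*r + r^2" using s2 by simp
    moreover have "k = (R^2 + r^2 - rho^2)/2" using hk by simp
    ultimately show ?thesis by (simp add: field_simps)
  qed
  show ?thesis unfolding p1 k using c D by (simp add: field_simps)
qed

theorem mainTheorem2:
  fixes c aK s :: real
  assumes c_pos: "c > 0"
    and wall_type: "(s = 1 \<and> c < aK) \<or> (s = -1 \<and> aK \<noteq> 0 \<and> \<bar>aK\<bar> < c)"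
  shows "\<exists>kx kr. \<forall>a R (P :: nat \<Rightarrow> real^2) v Fs.
           a \<noteq> 0 \<longrightarrow>
           billiard_traj (vector [- 2 * c, 0]) s aK a P v Fs \<longrightarrow>
           (\<forall>i. dist (Fs i) 0 = R) \<longrightarrow>
           (\<forall>i. Fs i \<noteq> Fs (Suc i) \<longrightarrow>
                infdist (vector [quad2 kx a R, 0]) (affine hull {Fs i, Fs (Suc i)}) = \<bar>quad2 kr a R\<bar>)"
proof -
  define D where "D = 2*(aK^2 - c^2)"
  have D0: "aK^2 - c^2 \<noteq> 0"
  proof
    assume "aK^2 - c^2 = 0"
    then have "\<bar>aK\<bar> = c" using c_pos
      by (metis abs_of_pos eq_iff_diff_eq_0 power2_abs power2_eq_imp_eq abs_ge_zero less_imp_le)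
    then show False using wall_type by auto
  qed
  have s2: "s^2 = 1" using wall_type by auto
  have sabs: "\<bar>s\<bar> = 1" using wall_type by auto
  define kx where "kx = (-4*c/D, 0::real, c/D, 8*c*aK/D, 0::real, -4*c*aK^2/D)"
  define kr where "kr = (-4*aK/D, 0::real, aK/D, 8*aK^2/D - 2, 0::real, -4*aK^3/D + 2*aK)"
  have qx: "quad2 kx a R = c*(R^2 - 4*(a-aK)^2)/(2*(aK^2-c^2))" for a R
  proof -
    have "quad2 kx a R = c*(R^2 - 4*(a-aK)^2)/D"
      unfolding quad2_def kx_def by (simp add: divide_inverse algebra_simps power2_eq_square)
    then show ?thesis unfolding D_def .
  qed
  have qr: "quad2 kr a R = aK*(R^2 - 4*(a-aK)^2)/(2*(aK^2-c^2)) - 2*(a-aK)" for a R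
  proof -
    have "quad2 kr a R = aK*(R^2 - 4*(a-aK)^2)/D - 2*(a-aK)"
      unfolding quad2_def kr_def by (simp add: divide_inverse algebra_simps power2_eq_square power3_eq_cube)
    then show ?thesis unfolding D_def .
  qed
  show ?thesis
  proof (intro exI allI impI)
    fix a R and P :: "nat \<Rightarrow> real^2" and v Fs i
    assume a0: "a \<noteq> 0" and bt: "billiard_traj (vector [- 2 * c, 0]) s aK a P v Fs"
      and onR: "\<forall>i. dist (Fs i) 0 = R" and ne: "Fs i \<noteq> Fs (Suc i)"
    define F :: "real^2" where "F = vector [- 2 * c, 0]"
    define Q where "Q = P i"
    define A where "A = Fs i"
    define B where "B = Fs (Suc i)"
    have hw: "dist Q F + s * dist Q 0 = 2*aK"
      using bt unfolding billiard_traj_def wall_def Q_def F_def by auto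
    have hA: "dist Q F + sgn a * dist Q A = 2*a"
      using bt unfolding billiard_traj_def is_second_focus_def kepler_orbit_def Q_def F_def A_def by auto
    have hB: "dist Q F + sgn a * dist Q B = 2*a"
      using bt unfolding billiard_traj_def is_second_focus_def kepler_orbit_def Q_def F_def B_def by auto
    have sa: "sgn a \<noteq> 0" "(sgn a)^2 = 1" using a0 by (auto simp: sgn_if)
    have "sgn a * dist Q A = sgn a * dist Q B" using hA hB by linarith
    then have dAB: "dist Q A = dist Q B" using sa(1) by simp
    define r where "r = norm Q"
    define d where "d = dist Q F"
    define rho where "rho = dist Q A"
    have hr: "r^2 = (Q$1)^2 + (Q$2)^2" unfolding r_def power2_norm_eq_inner inner2 by (simp add: power2_eq_square)
    have hd: "d^2 = (Q$1 + 2*c)^2 + (Q$2)^2"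
      unfolding d_def dist_norm power2_norm_eq_inner inner2 F_def by (simp add: power2_eq_square algebra_simps)
    have hd2: "d = 2*aK - s*r" using hw unfolding d_def r_def by (simp add: dist_norm)
    have hrho: "rho^2 = (2*a - d)^2"
    proof -
      have "sgn a * rho = 2*a - d" using hA unfolding rho_def d_def by simp
      then have "(sgn a)^2 * rho^2 = (2*a - d)^2" by (metis power_mult_distrib)
      then show ?thesis using sa by simp
    qed
    have Q0: "Q \<noteq> 0"
    proof
      assume "Q = 0"
      then have r0: "r = 0" unfolding r_def by simp
      then have "d^2 = (2*c)^2" using hd hr \<open>Q = 0\<close> by simp
      then have "d = 2*c" using c_pos unfolding d_def by (metis power2_eq_imp_eq zero_le_dist mult_nonneg_nonneg zero_le_numeral less_imp_le)
      then show False using hd2 r0 wall_type by auto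
    qed
    have nA: "norm A = R" "norm B = R" using onR unfolding A_def B_def by auto
    have kA: "2*(A \<bullet> Q) = r^2 + R^2 - rho^2"
    proof -
      have "rho^2 = (Q - A) \<bullet> (Q - A)" unfolding rho_def dist_norm by (simp add: power2_norm_eq_inner)
      also have "... = r^2 - 2*(A \<bullet> Q) + R^2" unfolding r_def nA(1)[symmetric]
        by (simp add: inner_diff_left inner_diff_right inner_commute power2_norm_eq_inner)
      finally show ?thesis by simp
    qed
    have kB: "2*(B \<bullet> Q) = r^2 + R^2 - rho^2"
    proof -
      have rB: "rho = dist Q B" using dAB rho_def by simp
      have "rho^2 = (Q - B) \<bullet> (Q - B)" unfolding rB dist_norm by (simp add: power2_norm_eq_inner)
      also have "... = r^2 - 2*(B \<bullet> Q) + R^2" unfolding r_def nA(2)[symmetric]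
        by (simp add: inner_diff_left inner_diff_right inner_commute power2_norm_eq_inner)
      finally show ?thesis by simp
    qed
    define k where "k = A \<bullet> Q"
    have hull: "affine hull {A, B} = {x. x \<bullet> Q = k}"
      by (rule line_eq) (use ne kA kB Q0 in \<open>auto simp: A_def B_def k_def\<close>)
    define X :: "real^2" where "X = vector [quad2 kx a R, 0]"
    have XQ: "X \<bullet> Q = (c*(R^2 - 4*(a-aK)^2)/(2*(aK^2-c^2))) * Q$1"
      unfolding X_def inner2 qx by simp
    have key: "X \<bullet> Q - k = - s * r * quad2 kr a R"
    proof -
      have k2: "2*k = r^2 + R^2 - rho^2" using kA unfolding k_def .
      have "X \<bullet> Q - k = (c*(R^2 - 4*(a-aK)^2)/(2*(aK^2-c^2))) * Q$1 - k" using XQ by simp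
      also have "... = - s * r * (aK*(R^2 - 4*(a-aK)^2)/(2*(aK^2-c^2)) - 2*(a-aK))"
        by (rule alg[OF c_pos D0 s2 hr hd hd2 hrho k2])
      also have "... = - s * r * quad2 kr a R" using qr by simp
      finally show ?thesis .
    qed
    have rpos: "r > 0" using Q0 unfolding r_def by simp
    have "infdist X (affine hull {A, B}) = \<bar>X \<bullet> Q - k\<bar> / norm Q"
      unfolding hull by (rule hyper_infdist[OF Q0])
    also have "... = \<bar>quad2 kr a R\<bar>" unfolding key r_def[symmetric] using rpos sabs
      by (simp add: abs_mult)
    finally show "infdist (vector [quad2 kx a R, 0]) (affine hull {Fs i, Fs (Suc i)}) = \<bar>quad2 kr a R\<bar>"
      unfolding X_def A_def B_def .
  qed
qed

end
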